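(* Let $\rho>1$ and let $\mathbf{p}=(p_1,\ldots,p_n)$ be a probability distribution with $p_1\geq\cdots\geq p_n>0$ and $p_1/p_n\leq\rho$. Then $$\log_2 n-H(\mathbf{z}_\rho(\mathbf{p}))\leq\left(\frac{\rho\ln\rho}{\rho-1}-1-\ln\frac{\rho\ln\rho}{\rho-1}\right)\frac{1}{\ln 2}.$$
   Context: $H$ is Shannon entropy in bits and $\ln$ is the natural logarithm. Let $i=\left\lfloor\frac{1-np_n}{p_n(\rho-1)}\right\rfloor$. Define $\mathbf{z}_\rho(\mathbf{p})$ as the length-$n$ vector whose first $i$ entries equal $\rho p_n$, whose next entry equals $1-(n+i\rho-i-1)p_n$, and whose remaining $n-i-1$ entries equal $p_n$. *)

theory Defs
  imports Complex_Main
begin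

text \<open>Vectors of length n are functions on indices 1..n.
  Shannon entropy in bits (entries are positive where it is used).\<close>
definition entropy :: "nat \<Rightarrow> (nat \<Rightarrow> real) \<Rightarrow> real" where
  "entropy n q = - (\<Sum>k=1..n. q k * log 2 (q k))"

text \<open>The index i = floor((1 - n p_n) / (p_n (rho - 1))) (nonnegative when n p_n \<le> 1).\<close>
definition zidx :: "real \<Rightarrow> nat \<Rightarrow> (nat \<Rightarrow> real) \<Rightarrow> nat" where
  "zidx \<rho> n p = nat \<lfloor>(1 - real n * p n) / (p n * (\<rho> - 1))\<rfloor>"

definition zvec :: "real \<Rightarrow> nat \<Rightarrow> (nat \<Rightarrow> real) \<Rightarrow> nat \<Rightarrow> real" where
  "zvec \<rho> n p k = (let i = zidx \<rho> n p in
     if k \<le> i then \<rho> * p n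
     else if k = i + 1 then 1 - (real n + real i * \<rho> - real i - 1) * p n
     else p n)"

end

theory Submission imports Defs "HOL-Analysis.Analysis" begin

lemma chordA:
  fixes \<rho> t :: real
  assumes "\<rho> > 1" "1 \<le> t" "t \<le> \<rho>"
  shows "t * ln t \<le> (t - 1) * (\<rho> * ln \<rho> / (\<rho> - 1))"
proof -
  have cv: "convex_on {1..\<rho>} (\<lambda>t. t * ln t)"
  proof (rule convex_on_realI[where f' = "\<lambda>t. ln t + 1"])
    show "connected {1..\<rho>}" by simp
    fix x assume "x \<in> {1..\<rho>}"
    then show "((\<lambda>t. t * ln t) has_real_derivative ln x + 1) (at x)"
      by (auto intro!: derivative_eq_intros)
  next
    fix x y :: real assume "x \<in> {1..\<rho>}" "y \<in> {1..\<rho>}" "x \<le> y"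
    then show "ln x + 1 \<le> ln y + 1" by auto
  qed
  have "t * ln t \<le> (\<rho> * ln \<rho> - 1 * ln 1) / (\<rho> - 1) * (t - 1) + 1 * ln 1"
    using convex_onD_Icc'[OF cv, of t] assms by simp
  then show ?thesis by (simp add: field_simps)
qed

lemma keyB:
  fixes z :: "nat \<Rightarrow> real" and q \<rho> :: real and n :: nat
  assumes r: "\<rho> > 1" and q: "q > 0" and n: "n \<ge> 1"
    and zr: "\<And>k. k \<in> {1..n} \<Longrightarrow> q \<le> z k \<and> z k \<le> \<rho> * q"
    and s: "(\<Sum>k=1..n. z k) = 1"
  shows "(\<Sum>k=1..n. z k * ln (real n * z k)) \<le> \<rho> * ln \<rho> / (\<rho> - 1) - 1 - ln (\<rho> * ln \<rho> / (\<rho> - 1))"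
proof -
  define c where "c = \<rho> * ln \<rho> / (\<rho> - 1)"
  define a where "a = real n * q"
  have cpos: "c > 0" unfolding c_def using r by (auto intro!: divide_pos_pos mult_pos_pos)
  have apos: "a > 0" unfolding a_def using q n by auto
  have each: "z k * ln (real n * z k) \<le> z k * ln a + (z k - q) * c" if k: "k \<in> {1..n}" for k
  proof -
    define t where "t = z k / q"
    have zk: "z k = q * t" unfolding t_def using q by simp
    have t1: "1 \<le> t" "t \<le> \<rho>" using zr[OF k] q unfolding t_def by (auto simp: field_simps)
    have "real n * z k = a * t" unfolding a_def zk by simp
    then have "ln (real n * z k) = ln a + ln t"
      using apos t1 by (simp add: ln_mult)
    then have "z k * ln (real n * z k) = z k * ln a + q * (t * ln t)"
      using zk by (simp add: algebra_simps)
    also have "\<dots> \<le> z k * ln a + q * ((t - 1) * c)"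
      using chordA[OF r t1] q unfolding c_def by (intro add_left_mono mult_left_mono) auto
    also have "\<dots> = z k * ln a + (z k - q) * c" using zk by (simp add: algebra_simps)
    finally show ?thesis .
  qed
  have "(\<Sum>k=1..n. z k * ln (real n * z k)) \<le> (\<Sum>k=1..n. z k * ln a + (z k - q) * c)"
    by (rule sum_mono) (rule each)
  also have "\<dots> = ln a + (1 - a) * c"
  proof -
    have "(\<Sum>k=1..n. z k * ln a + (z k - q) * c) = (\<Sum>k=1..n. z k) * ln a + ((\<Sum>k=1..n. z k) - real n * q) * c"
      by (simp add: sum.distrib sum_distrib_right[symmetric] sum_subtractf)
    then show ?thesis unfolding s a_def by simp
  qed
  also have "\<dots> \<le> c - 1 - ln c"
  proof -
    have "ln (a * c) \<le> a * c - 1" using apos cpos by (intro ln_le_minus_one) auto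
    then show ?thesis using apos cpos by (simp add: ln_mult algebra_simps)
  qed
  finally show ?thesis unfolding c_def .
qed

lemma monoP:
  fixes p :: "nat \<Rightarrow> real"
  assumes "\<forall>k. 1 \<le> k \<and> k < n \<longrightarrow> p (k + 1) \<le> p k" "1 \<le> j"
  shows "j \<le> m \<Longrightarrow> m \<le> n \<Longrightarrow> p m \<le> p j"
proof (induction m)
  case 0 then show ?case using assms by simp
next
  case (Suc m)
  show ?case
  proof (cases "j = Suc m")
    case False
    then have "j \<le> m" using Suc by simp
    then have "p m \<le> p j" using Suc by simp
    moreover have "p (m+1) \<le> p m" using assms(1) Suc \<open>j \<le> m\<close> assms(2) by auto
    ultimately show ?thesis by simp
  qed simp
qed

theorem lemma7:
  fixes \<rho> :: real and n :: nat and p :: "nat \<Rightarrow> real"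
  assumes "\<rho> > 1" and "n \<ge> 1"
    and "\<forall>k\<in>{1..n}. p k \<ge> 0"
    and "(\<Sum>k=1..n. p k) = 1"
    and "\<forall>k. 1 \<le> k \<and> k < n \<longrightarrow> p (k + 1) \<le> p k"
    and "p n > 0"
    and "p 1 / p n \<le> \<rho>"
  shows "log 2 (real n) - entropy n (zvec \<rho> n p)
    \<le> (\<rho> * ln \<rho> / (\<rho> - 1) - 1 - ln (\<rho> * ln \<rho> / (\<rho> - 1))) * (1 / ln 2)"
proof -
  define q where "q = p n"
  have q: "q > 0" using assms q_def by simp
  have r: "\<rho> > 1" by fact
  have n: "n \<ge> 1" by fact
  have bnd: "q \<le> p k \<and> p k \<le> \<rho> * q" if "k \<in> {1..n}" for k
  proof -
    have "p n \<le> p k" using monoP[OF assms(5), of k n] that by auto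
    moreover have "p k \<le> p 1" using monoP[OF assms(5), of 1 k] that by auto
    moreover have "p 1 \<le> \<rho> * q" using assms(7) q unfolding q_def by (simp add: divide_le_eq)
    ultimately show ?thesis unfolding q_def by simp
  qed
  have "(\<Sum>k=1..n. q) \<le> (\<Sum>k=1..n. p k)" by (rule sum_mono) (use bnd in auto)
  then have nq: "real n * q \<le> 1" using assms(4) by simp
  have "(\<Sum>k=1..n. p k) \<le> (\<Sum>k=1..n. \<rho> * q)" by (rule sum_mono) (use bnd in auto)
  then have nrq: "1 \<le> real n * \<rho> * q" using assms(4) by simp
  define A where "A = (1 - real n * q) / (q * (\<rho> - 1))"
  define i where "i = zidx \<rho> n p"
  have qr: "q * (\<rho> - 1) > 0" using q r by simp
  have A0: "A \<ge> 0" unfolding A_def using nq qr by simp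
  have ii: "real i = of_int \<lfloor>A\<rfloor>" unfolding i_def zidx_def A_def q_def[symmetric]
    using A0 A_def by simp
  have iA: "real i \<le> A" "A < real i + 1" using ii by linarith+
  have iA1: "real i * (q * (\<rho> - 1)) \<le> 1 - real n * q" using iA(1) qr unfolding A_def
    by (simp add: le_divide_eq)
  have iA2: "1 - real n * q < (real i + 1) * (q * (\<rho> - 1))" using iA(2) qr unfolding A_def
    by (simp add: divide_less_eq)
  have "real i * (q * (\<rho> - 1)) \<le> real n * (q * (\<rho> - 1))" using iA1 nrq by (simp add: algebra_simps)
  then have "real i \<le> real n" using qr by (rule mult_right_le_imp_le)
  then have iln: "i \<le> n" by simp
  define z where "z = zvec \<rho> n p"
  have zdef: "z k = (if k \<le> i then \<rho> * q else if k = i + 1 then 1 - (real n + real i * \<rho> - real i - 1) * q else q)" for k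
    unfolding z_def zvec_def i_def q_def Let_def by simp
  define rr where "rr = 1 - (real n + real i * \<rho> - real i - 1) * q"
  have rr: "q \<le> rr" "rr \<le> \<rho> * q" unfolding rr_def using iA1 iA2 by (auto simp: algebra_simps)
  have zr: "q \<le> z k \<and> z k \<le> \<rho> * q" for k
    using rr r q unfolding zdef rr_def[symmetric] by auto
  have zs: "(\<Sum>k=1..n. z k) = 1"
  proof (cases "i = n")
    case True
    then have "(\<Sum>k=1..n. z k) = (\<Sum>k=1..n. \<rho> * q)" by (intro sum.cong) (auto simp: zdef)
    also have "\<dots> = 1" using True iA1 nrq by (simp add: algebra_simps)
    finally show ?thesis .
  next
    case False
    then have il: "i < n" using iln by simp
    have sets: "{1..n} = {1..i} \<union> ({i+1} \<union> {i+2..n})" using il by auto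
    have "(\<Sum>k=1..n. z k) = (\<Sum>k\<in>{1..i}. z k) + (z (i+1) + (\<Sum>k\<in>{i+2..n}. z k))"
      unfolding sets by (subst sum.union_disjoint; auto)+
    also have "(\<Sum>k\<in>{1..i}. z k) = (\<Sum>k\<in>{1..i}. \<rho> * q)" by (intro sum.cong) (auto simp: zdef)
    also have "(\<Sum>k\<in>{i+2..n}. z k) = (\<Sum>k\<in>{i+2..n}. q)" by (intro sum.cong) (auto simp: zdef)
    also have "z (i+1) = rr" unfolding zdef rr_def by simp
    finally have "(\<Sum>k=1..n. z k) = real i * (\<rho> * q) + (rr + real (n - (i+1)) * q)" by simp
    also have "\<dots> = 1" using il unfolding rr_def by (simp add: of_nat_diff algebra_simps)
    finally show ?thesis .
  qed
  have K: "(\<Sum>k=1..n. z k * ln (real n * z k)) \<le> \<rho> * ln \<rho> / (\<rho> - 1) - 1 - ln (\<rho> * ln \<rho> / (\<rho> - 1))"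
    by (rule keyB[OF r q n _ zs]) (use zr in auto)
  have zpos: "z k > 0" for k using zr[of k] q by linarith
  have "log 2 (real n) - entropy n z = (\<Sum>k=1..n. z k) * log 2 (real n) + (\<Sum>k=1..n. z k * log 2 (z k))"
    unfolding entropy_def zs by simp
  also have "\<dots> = (\<Sum>k=1..n. z k * ln (real n * z k)) * (1 / ln 2)"
  proof -
    have "z k * log 2 (real n) + z k * log 2 (z k) = z k * ln (real n * z k) * (1 / ln 2)" for k
      using zpos[of k] n by (simp add: log_def ln_mult algebra_simps add_divide_distrib)
    then have "(\<Sum>k=1..n. z k * log 2 (real n) + z k * log 2 (z k)) = (\<Sum>k=1..n. z k * ln (real n * z k) * (1 / ln 2))"
      by (intro sum.cong) auto
    then show ?thesis by (simp add: sum.distrib sum_distrib_right sum_divide_distrib)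
  qed
  also have "\<dots> \<le> (\<rho> * ln \<rho> / (\<rho> - 1) - 1 - ln (\<rho> * ln \<rho> / (\<rho> - 1))) * (1 / ln 2)"
    by (rule mult_right_mono[OF K]) simp
  finally show ?thesis unfolding z_def .
qed
end
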